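(* Let $b_0:[t_0,T]\to\mathbb{R}$ and $b=(b_1,b_2,b_3):[t_0,T]\to\mathbb{R}^3$ be continuous and $H(t)=b_0(t)\mathbb{I}+b(t)\cdot\sigma$. Let $q(t)=(u_0(t),\tilde u_1(t),\tilde u_2(t),\tilde u_3(t))$ be the solution of the linear Cauchy problem $\dot q'(t)=A(t)q'(t)$, $q(t_0)=(1,0,0,0)$, where $q'$ is the column vector of $q$ and $$A(t)=\begin{pmatrix}0&b_1&b_2&b_3\\-b_1&0&-b_3&b_2\\-b_2&b_3&0&-b_1\\-b_3&-b_2&b_1&0\end{pmatrix}(t),$$ equivalently $\dot u_0=b\cdot\tilde u$, $\dot{\tilde u}=-u_0 b+b\times\tilde u$. Then $q(t)$ is real with $u_0(t)^2+\|\tilde u(t)\|^2=1$ for all $t$, and $$U_H(t,t_0)=\exp\Bigl\{-i\int_{t_0}^tb_0(\tau)d\tau\Bigr\}\bigl(u_0(t)\,\mathbb{I}+i\,\tilde u(t)\cdot\sigma\bigr),\qquad t\in[t_0,T].$$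
   Context: $\sigma=(\sigma_1,\sigma_2,\sigma_3)$ are the Pauli matrices $\sigma_1=\begin{pmatrix}0&1\\1&0\end{pmatrix}$, $\sigma_2=\begin{pmatrix}0&-i\\i&0\end{pmatrix}$, $\sigma_3=\begin{pmatrix}1&0\\0&-1\end{pmatrix}$; $v\cdot\sigma=\sum_jv_j\sigma_j$; $\times$ is the vector product on $\mathbb{R}^3$. $U_H(t,t_0)$ is the solution of $i\frac{d}{dt}U_H(t,t_0)=H(t)U_H(t,t_0)$, $U_H(t_0,t_0)=\mathbb{I}$ on $\mathbb{C}^2$. *)

theory Defs
  imports "HOL-Analysis.Analysis"
begin

definition mat2 :: "complex \<Rightarrow> complex \<Rightarrow> complex \<Rightarrow> complex \<Rightarrow> complex^2^2" where
  "mat2 a b c d = (\<chi> i j. if i = 1 then (if j = 1 then a else b) else (if j = 1 then c else d))"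

definition sigma1 :: "complex^2^2" where "sigma1 = mat2 0 1 1 0"
definition sigma2 :: "complex^2^2" where "sigma2 = mat2 0 (-\<i>) \<i> 0"
definition sigma3 :: "complex^2^2" where "sigma3 = mat2 1 0 0 (-1)"

definition dot_sigma :: "real \<Rightarrow> real \<Rightarrow> real \<Rightarrow> complex^2^2" where
  "dot_sigma v1 v2 v3 = v1 *\<^sub>R sigma1 + v2 *\<^sub>R sigma2 + v3 *\<^sub>R sigma3"

definition ham :: "(real \<Rightarrow> real) \<Rightarrow> (real \<Rightarrow> real) \<Rightarrow> (real \<Rightarrow> real) \<Rightarrow> (real \<Rightarrow> real)
    \<Rightarrow> real \<Rightarrow> complex^2^2" where
  "ham b0 b1 b2 b3 t = b0 t *\<^sub>R mat 1 + dot_sigma (b1 t) (b2 t) (b3 t)"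

end

theory Submission
  imports Defs
begin

lemma col:
  fixes b0 b1 b2 b3 u0 u1 u2 u3 th :: "real \<Rightarrow> real" and x y :: "real \<Rightarrow> complex"
  assumes S: "convex S" "t0 \<in> S"
    and th: "\<And>t. t \<in> S \<Longrightarrow> (th has_real_derivative b0 t) (at t within S)" "th t0 = 0"
    and q_init: "u0 t0 = 1" "u1 t0 = 0" "u2 t0 = 0" "u3 t0 = 0"
    and q_ode: "\<And>t. t \<in> S \<Longrightarrow>
        (u0 has_real_derivative (b1 t * u1 t + b2 t * u2 t + b3 t * u3 t)) (at t within S) \<and>
        (u1 has_real_derivative (- b1 t * u0 t - b3 t * u2 t + b2 t * u3 t)) (at t within S) \<and>
        (u2 has_real_derivative (- b2 t * u0 t + b3 t * u1 t - b1 t * u3 t)) (at t within S) \<and>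
        (u3 has_real_derivative (- b3 t * u0 t - b2 t * u1 t + b1 t * u2 t)) (at t within S)"
    and nrm: "\<And>t. t \<in> S \<Longrightarrow> (u0 t)\<^sup>2 + (u1 t)\<^sup>2 + (u2 t)\<^sup>2 + (u3 t)\<^sup>2 = 1"
    and xd: "\<And>t. t \<in> S \<Longrightarrow> (x has_vector_derivative
        (- \<i> * ((of_real (b0 t) + of_real (b3 t)) * x t + (of_real (b1 t) - \<i> * of_real (b2 t)) * y t))) (at t within S)"
    and yd: "\<And>t. t \<in> S \<Longrightarrow> (y has_vector_derivative
        (- \<i> * ((of_real (b1 t) + \<i> * of_real (b2 t)) * x t + (of_real (b0 t) - of_real (b3 t)) * y t))) (at t within S)"
    and t: "t \<in> S"
  shows "x t = cis (- th t) * ((of_real (u0 t) + \<i> * of_real (u3 t)) * x t0 + (of_real (u2 t) + \<i> * of_real (u1 t)) * y t0)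
       \<and> y t = cis (- th t) * (- (of_real (u2 t) - \<i> * of_real (u1 t)) * x t0 + (of_real (u0 t) - \<i> * of_real (u3 t)) * y t0)"
proof -
  define E where "E s = complex_of_real (cos (th s)) + \<i> * of_real (sin (th s))" for s
  define A where "A s = complex_of_real (u0 s) + \<i> * of_real (u3 s)" for s
  define Ac where "Ac s = complex_of_real (u0 s) - \<i> * of_real (u3 s)" for s
  define C where "C s = complex_of_real (u2 s) + \<i> * of_real (u1 s)" for s
  define Cc where "Cc s = complex_of_real (u2 s) - \<i> * of_real (u1 s)" for s
  define W1 where "W1 s = E s * (Ac s * x s - C s * y s)" for s
  define W2 where "W2 s = E s * (Cc s * x s + A s * y s)" for s
  have ii: "\<i> * \<i> = -1" by simp
  have d1: "(W1 has_vector_derivative 0) (at s within S)" if s: "s \<in> S" for s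
  proof -
    note q = q_ode[OF s]
    show ?thesis
      unfolding W1_def E_def Ac_def C_def
      apply (rule derivative_eq_intros refl q[THEN conjunct1] q[THEN conjunct2, THEN conjunct1]
           q[THEN conjunct2, THEN conjunct2, THEN conjunct1] q[THEN conjunct2, THEN conjunct2, THEN conjunct2]
           xd[OF s] yd[OF s] th(1)[OF s])+
      apply (simp only: of_real_add of_real_mult of_real_minus of_real_diff)
      using ii by algebra
  qed
  have d2: "(W2 has_vector_derivative 0) (at s within S)" if s: "s \<in> S" for s
  proof -
    note q = q_ode[OF s]
    show ?thesis
      unfolding W2_def E_def A_def Cc_def
      apply (rule derivative_eq_intros refl q[THEN conjunct1] q[THEN conjunct2, THEN conjunct1]
           q[THEN conjunct2, THEN conjunct2, THEN conjunct1] q[THEN conjunct2, THEN conjunct2, THEN conjunct2]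
           xd[OF s] yd[OF s] th(1)[OF s])+
      apply (simp only: of_real_add of_real_mult of_real_minus of_real_diff)
      using ii by algebra
  qed
  obtain c1 where c1: "\<And>s. s \<in> S \<Longrightarrow> W1 s = c1" using has_vector_derivative_zero_constant[OF S(1) d1] by blast
  obtain c2 where c2: "\<And>s. s \<in> S \<Longrightarrow> W2 s = c2" using has_vector_derivative_zero_constant[OF S(1) d2] by blast
  have w1: "W1 t = x t0" using c1[OF t] c1[OF S(2)] by (simp add: W1_def E_def Ac_def C_def th q_init)
  have w2: "W2 t = y t0" using c2[OF t] c2[OF S(2)] by (simp add: W2_def E_def A_def Cc_def th q_init)
  have n: "A t * Ac t + C t * Cc t = 1"
  proof -
    have "A t * Ac t + C t * Cc t = of_real ((u0 t)\<^sup>2 + (u1 t)\<^sup>2 + (u2 t)\<^sup>2 + (u3 t)\<^sup>2)"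
      unfolding A_def Ac_def C_def Cc_def using ii by (simp add: power2_eq_square; algebra)
    then show ?thesis using nrm[OF t] by simp
  qed
  have ce: "cis (- th t) * E t = 1"
    by (simp add: E_def complex_eq_iff cos_squared_eq power2_eq_square[symmetric])
  have "x t = cis (- th t) * (A t * W1 t + C t * W2 t)"
    using ce n unfolding W1_def W2_def by algebra
  moreover have "y t = cis (- th t) * (- Cc t * W1 t + Ac t * W2 t)"
    using ce n unfolding W1_def W2_def by algebra
  ultimately show ?thesis using w1 w2 by (simp add: A_def Ac_def C_def Cc_def)
qed

theorem theorem2:
  fixes b0 b1 b2 b3 u0 u1 u2 u3 :: "real \<Rightarrow> real"
    and t0 T :: real
    and U :: "real \<Rightarrow> complex^2^2"
  assumes cont: "continuous_on {t0..T} b0" "continuous_on {t0..T} b1"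
      "continuous_on {t0..T} b2" "continuous_on {t0..T} b3"
    and q_init: "u0 t0 = 1" "u1 t0 = 0" "u2 t0 = 0" "u3 t0 = 0"
    and q_ode: "\<And>t. t \<in> {t0..T} \<Longrightarrow>
        (u0 has_real_derivative (b1 t * u1 t + b2 t * u2 t + b3 t * u3 t)) (at t within {t0..T}) \<and>
        (u1 has_real_derivative (- b1 t * u0 t - b3 t * u2 t + b2 t * u3 t)) (at t within {t0..T}) \<and>
        (u2 has_real_derivative (- b2 t * u0 t + b3 t * u1 t - b1 t * u3 t)) (at t within {t0..T}) \<and>
        (u3 has_real_derivative (- b3 t * u0 t - b2 t * u1 t + b1 t * u2 t)) (at t within {t0..T})"
    and U_init: "U t0 = mat 1"
    and U_ode: "\<And>t. t \<in> {t0..T} \<Longrightarrow>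
        (U has_vector_derivative (mat (- \<i>) ** (ham b0 b1 b2 b3 t ** U t))) (at t within {t0..T})"
  shows "\<forall>t\<in>{t0..T}. (u0 t)\<^sup>2 + (u1 t)\<^sup>2 + (u2 t)\<^sup>2 + (u3 t)\<^sup>2 = 1 \<and>
           U t = mat (exp (- \<i> * complex_of_real (integral {t0..t} b0)))
                 ** (u0 t *\<^sub>R mat 1 + mat \<i> ** dot_sigma (u1 t) (u2 t) (u3 t))"
proof -
  let ?S = "{t0..T}"
  have cvx: "convex ?S" by simp
  have nrm: "(u0 t)\<^sup>2 + (u1 t)\<^sup>2 + (u2 t)\<^sup>2 + (u3 t)\<^sup>2 = 1" if t: "t \<in> ?S" for t
  proof -
    have d: "((\<lambda>s. (u0 s)\<^sup>2 + (u1 s)\<^sup>2 + (u2 s)\<^sup>2 + (u3 s)\<^sup>2) has_field_derivative 0) (at s within ?S)"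
      if s: "s \<in> ?S" for s
    proof -
      note q = q_ode[OF s]
      show ?thesis
        apply (rule derivative_eq_intros refl q[THEN conjunct1] q[THEN conjunct2, THEN conjunct1]
           q[THEN conjunct2, THEN conjunct2, THEN conjunct1] q[THEN conjunct2, THEN conjunct2, THEN conjunct2])+
        by (simp add: algebra_simps)
    qed
    obtain c where c: "\<And>s. s \<in> ?S \<Longrightarrow> (u0 s)\<^sup>2 + (u1 s)\<^sup>2 + (u2 s)\<^sup>2 + (u3 s)\<^sup>2 = c"
      using has_field_derivative_zero_constant[OF cvx d] by blast
    have t0: "t0 \<in> ?S" using t by auto
    show ?thesis using c[OF t] c[OF t0] q_init by simp
  qed
  define th where "th t = integral {t0..t} b0" for t
  have thd: "(th has_real_derivative b0 t) (at t within ?S)" if "t \<in> ?S" for t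
    unfolding th_def has_real_derivative_iff_has_vector_derivative
    by (rule integral_has_vector_derivative[OF cont(1) that])
  have th0: "th t0 = 0" by (simp add: th_def)
  have comp: "((\<lambda>s. U s $ i $ j) has_vector_derivative ((mat (- \<i>) ** (ham b0 b1 b2 b3 t ** U t)) $ i $ j)) (at t within ?S)"
    if "t \<in> ?S" for t i j
  proof -
    have bl: "bounded_linear (\<lambda>M::complex^2^2. M $ i $ j)"
      using bounded_linear_compose[OF bounded_linear_vec_nth[of j] bounded_linear_vec_nth[of i]] by (simp add: o_def)
    show ?thesis using bounded_linear.has_vector_derivative[OF bl U_ode[OF that]] by simp
  qed
  have sc: "\<And>(c::real) (z::complex). c *\<^sub>R z = of_real c * z" by (simp add: scaleR_conv_of_real)
  have ent: "(mat (- \<i>) ** (ham b0 b1 b2 b3 t ** U t)) $ 1 $ j = - \<i> * ((of_real (b0 t) + of_real (b3 t)) * U t $ 1 $ j + (of_real (b1 t) - \<i> * of_real (b2 t)) * U t $ 2 $ j)"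
    "(mat (- \<i>) ** (ham b0 b1 b2 b3 t ** U t)) $ 2 $ j = - \<i> * ((of_real (b1 t) + \<i> * of_real (b2 t)) * U t $ 1 $ j + (of_real (b0 t) - of_real (b3 t)) * U t $ 2 $ j)"
    for t j
    by (simp_all add: matrix_matrix_mult_def mat_def sum_2 ham_def dot_sigma_def sigma1_def sigma2_def sigma3_def mat2_def
        sc algebra_simps)
  have C: "U t $ 1 $ j = cis (- th t) * ((of_real (u0 t) + \<i> * of_real (u3 t)) * U t0 $ 1 $ j + (of_real (u2 t) + \<i> * of_real (u1 t)) * U t0 $ 2 $ j)
       \<and> U t $ 2 $ j = cis (- th t) * (- (of_real (u2 t) - \<i> * of_real (u1 t)) * U t0 $ 1 $ j + (of_real (u0 t) - \<i> * of_real (u3 t)) * U t0 $ 2 $ j)"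
    if t: "t \<in> ?S" for t j
    apply (rule col[where S="{t0..T}" and x="\<lambda>s. U s $ 1 $ j" and y="\<lambda>s. U s $ 2 $ j"])
    using t cvx thd th0 q_init q_ode nrm comp[where i=1 and j=j] comp[where i=2 and j=j]
    by (auto simp: ent)
  show ?thesis
  proof
    fix t assume t: "t \<in> ?S"
    have e: "exp (- \<i> * complex_of_real (integral {t0..t} b0)) = cis (- th t)"
      by (simp add: cis_conv_exp th_def)
    show "(u0 t)\<^sup>2 + (u1 t)\<^sup>2 + (u2 t)\<^sup>2 + (u3 t)\<^sup>2 = 1 \<and>
           U t = mat (exp (- \<i> * complex_of_real (integral {t0..t} b0)))
                 ** (u0 t *\<^sub>R mat 1 + mat \<i> ** dot_sigma (u1 t) (u2 t) (u3 t))"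
      using nrm[OF t] C[OF t, of 1] C[OF t, of 2] unfolding e
      by (simp add: vec_eq_iff forall_2 U_init matrix_matrix_mult_def mat_def sum_2 dot_sigma_def sigma1_def sigma2_def sigma3_def mat2_def
        sc algebra_simps)
  qed
qed

end
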